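(* Let $g$ and $s$ be integers with $s \geq -1$ and $g \geq 4s + 14$, and put $d = g - s$. Then $d^2 - 6(2g-2)$ is not a perfect square. *)

theory Defs
  imports Main
begin

end

theory Submission
  imports Defs
begin

theorem lemma2p1:
  fixes g s d :: int
  assumes "s \<ge> -1" and "g \<ge> 4 * s + 14" and "d = g - s"
  shows "\<not> (\<exists>k::int. k ^ 2 = d ^ 2 - 6 * (2 * g - 2))"
proof
  assume "\<exists>k::int. k ^ 2 = d ^ 2 - 6 * (2 * g - 2)"
  then obtain k0 :: int where k0: "k0 ^ 2 = d ^ 2 - 6 * (2 * g - 2)" by blast
  define k where "k = \<bar>k0\<bar>"
  define x where "x = d - 6"
  have k0': "k \<ge> 0" "k^2 = k0^2" unfolding k_def by auto
  have eq: "x^2 - k^2 = 12 * (s + 2)" proof -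
    have g: "g = d + s" using assms(3) by simp
    have "k0^2 = d ^ 2 - 6 * (2 * (d + s) - 2)" using k0 unfolding g .
    thus ?thesis using k0'(2) unfolding x_def by (simp add: power2_eq_square algebra_simps)
  qed
  have xb: "x \<ge> 3 * s + 8" using assms unfolding x_def by simp
  define u where "u = x - k"
  define v where "v = x + k"
  have uv: "u * v = 12 * (s + 2)" using eq unfolding u_def v_def
    by (simp add: power2_eq_square algebra_simps)
  have kx: "k < x"
  proof (rule ccontr)
    assume "\<not> k < x"
    hence "x \<le> k" by simp
    moreover have "x \<ge> 0" using xb assms by simp
    ultimately have "x*x \<le> k*k" by (simp add: mult_mono)
    thus False using eq assms by (simp add: power2_eq_square)
  qed
  have u1: "u \<ge> 1" using kx unfolding u_def by simp
  have vu: "v \<ge> u" using k0' unfolding u_def v_def by simp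
  have ue: "even u"
  proof (rule ccontr)
    assume "odd u"
    moreover have "v = u + 2 * k" unfolding u_def v_def by simp
    ultimately have "odd v" by simp
    with \<open>odd u\<close> have "odd (u*v)" by simp
    thus False using uv by simp
  qed
  have u2: "u \<ge> 2"
  proof (rule ccontr)
    assume "\<not> u \<ge> 2"
    hence "u = 1" using u1 by simp
    thus False using ue by simp
  qed
  have v2: "v \<ge> 2" using u2 vu by simp
  have "(u - 2) * (v - 2) \<ge> 0" using u2 v2 by simp
  hence "u + v \<le> 6 * (s + 2) + 2" using uv by (simp add: algebra_simps)
  moreover have "u + v = 2 * x" unfolding u_def v_def by simp
  ultimately show False using xb by simp
qed

end
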